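(* Let $a,b\in\mathbb{Z}$. The degree 4 symplectic polynomial $q(x)=x^4+ax^3+bx^2+ax+1$ satisfies the homological criterion (i.e. it is symplectically irreducible, is not a cyclotomic polynomial, and is not a polynomial in $x^k$ for any $k>1$) if and only if $a\ne0$, $(a,b)\notin\{(1,1),(-1,1)\}$, and $a^2-4b+8$ is not a perfect square.
   Context: A symplectic polynomial is an even-degree integer polynomial that is monic and palindromic (equivalently, the characteristic polynomial of an element of $\mathrm{Sp}(2n,\mathbb{Z})$). A symplectic polynomial is symplectically irreducible if it is not a product of two nontrivial symplectic polynomials. A cyclotomic polynomial is the minimal polynomial over $\mathbb{Q}$ of a primitive $n$-th root of unity. *)

theory Defs
  imports "HOL-Computational_Algebra.Computational_Algebra"
begin

definition symplectic_poly :: "int poly \<Rightarrow> bool" where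
  "symplectic_poly p \<longleftrightarrow> even (degree p) \<and> lead_coeff p = 1 \<and>
     (\<forall>i \<le> degree p. coeff p i = coeff p (degree p - i))"

definition symplectically_irreducible :: "int poly \<Rightarrow> bool" where
  "symplectically_irreducible p \<longleftrightarrow> symplectic_poly p \<and> degree p > 0 \<and>
     \<not> (\<exists>f g. symplectic_poly f \<and> symplectic_poly g \<and> degree f > 0 \<and> degree g > 0 \<and> p = f * g)"

definition primitive_root_of_unity :: "nat \<Rightarrow> complex \<Rightarrow> bool" where
  "primitive_root_of_unity n z \<longleftrightarrow> n > 0 \<and> z ^ n = 1 \<and> (\<forall>k. 0 < k \<and> k < n \<longrightarrow> z ^ k \<noteq> 1)"

text \<open>Cyclotomic: the minimal polynomial over Q (monic, irreducible over Q) of a primitive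
  n-th root of unity.\<close>
definition cyclotomic_poly :: "int poly \<Rightarrow> bool" where
  "cyclotomic_poly p \<longleftrightarrow> lead_coeff p = 1 \<and> irreducible (map_poly (of_int :: int \<Rightarrow> rat) p) \<and>
     (\<exists>n z. primitive_root_of_unity n z \<and> poly (map_poly (of_int :: int \<Rightarrow> complex) p) z = 0)"

definition poly_in_power :: "int poly \<Rightarrow> nat \<Rightarrow> bool" where
  "poly_in_power p k \<longleftrightarrow> (\<exists>r :: int poly. p = pcompose r (monom 1 k))"

definition homological_criterion :: "int poly \<Rightarrow> bool" where
  "homological_criterion p \<longleftrightarrow> symplectically_irreducible p \<and> \<not> cyclotomic_poly p \<and>
     \<not> (\<exists>k > 1. poly_in_power p k)"

end

theory Submission imports Defs "Berlekamp_Zassenhaus.Factor_Bound" begin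
hide_const (open) up_ring.coeff up_ring.monom

lemma q_deg: "degree [:1, a, b, a, 1::int:] = 4" by simp

lemma q_symp: "symplectic_poly [:1, a, b, a, 1::int:]"
  unfolding symplectic_poly_def
proof (intro conjI allI impI)
  fix i assume "i \<le> degree [:1, a, b, a, 1::int:]"
  then have "i \<in> {0,1,2,3,4}" by auto
  then show "coeff [:1, a, b, a, 1:] i = coeff [:1, a, b, a, 1:] (degree [:1, a, b, a, 1::int:] - i)"
    by (auto simp: numeral_eq_Suc)
qed auto

lemma prod22: "[:g0, g1, g2::int:] * [:h0, h1, h2:] = [:g0*h0, g0*h1+g1*h0, g0*h2+g1*h1+g2*h0, g1*h2+g2*h1, g2*h2:]"
  by (simp add: mult_pCons_left smult_add_right add_pCons algebra_simps del: mult_pCons_right)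
lemma prod2: "[:1, c, 1::int:] * [:1, d, 1:] = [:1, c+d, 2 + c*d, c+d, 1:]"
proof -
  have e: "1 * 1 + c * d + 1 * 1 = 2 + c * (d::int)" "1 * d + c * 1 = c + (d::int)" "c * 1 + 1 * d = c + (d::int)" by simp_all
  show ?thesis using prod22[of 1 c 1 1 d 1] unfolding e by simp
qed

lemma deg2_form: "degree (p::'a::zero poly) \<le> 2 \<Longrightarrow> p = [:coeff p 0, coeff p 1, coeff p 2:]"
  by (rule poly_eqI) (auto simp: coeff_pCons coeff_eq_0 numeral_2_eq_2 split: nat.splits)

lemma symp_deg2:
  assumes "symplectic_poly f" "degree f = 2"
  shows "f = [:1, coeff f 1, 1:]"
proof -
  have lc: "lead_coeff f = 1" using assms(1) unfolding symplectic_poly_def by blast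
  then have l: "coeff f 2 = 1" using assms(2) by simp
  have "\<forall>i \<le> degree f. coeff f i = coeff f (degree f - i)" using assms(1) unfolding symplectic_poly_def by blast
  then have "coeff f 0 = coeff f (degree f - 0)" by blast
  then have c0: "coeff f 0 = 1" using l assms(2) by simp
  have "f = [:coeff f 0, coeff f 1, coeff f 2:]" by (rule deg2_form) (simp add: assms(2))
  then show ?thesis unfolding c0 l .
qed

lemma pderiv_q: "poly (pderiv [:1, a, b, a, 1::int:]) 0 = a"
  by (simp add: pderiv_pCons)

lemma comp_ex: "pcompose [:1, b, 1::int:] (monom 1 2) = [:1, 0, b, 0, 1:]"
proof (rule poly_eq_poly_eq_iff[THEN iffD1], rule ext)
  fix x :: int
  show "poly (pcompose [:1, b, 1::int:] (monom 1 2)) x = poly [:1, 0, b, 0, 1:] x"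
    by (simp add: poly_pcompose poly_monom power2_eq_square algebra_simps)
qed

lemma symp_irr_iff:
  "symplectically_irreducible [:1, a, b, a, 1::int:] \<longleftrightarrow> \<not> (\<exists>m::int. a^2 - 4*b + 8 = m^2)"
proof
  assume H: "symplectically_irreducible [:1, a, b, a, 1::int:]"
  show "\<not> (\<exists>m::int. a^2 - 4*b + 8 = m^2)"
  proof
    assume "\<exists>m::int. a^2 - 4*b + 8 = m^2"
    then obtain m where m: "a^2 - 4*b + 8 = m^2" by blast
    have "even (a - m)"
    proof -
      have "even (a^2 - m^2)" using m by presburger
      then show ?thesis by (auto simp: power2_eq_square)
    qed
    then obtain c where c: "a - m = 2*c" by blast
    define d where "d = a - c"
    have cd: "c + d = a" "2 + c*d = b"
    proof -
      show "c + d = a" by (simp add: d_def)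
      have "4*(c*d) = (a-m)*(a+m)" using c by (simp add: d_def algebra_simps)
      also have "\<dots> = a^2 - m^2" by (simp add: power2_eq_square algebra_simps)
      finally show "2 + c*d = b" using m by simp
    qed
    have "[:1, a, b, a, 1::int:] = [:1, c, 1:] * [:1, d, 1:]" using cd prod2 by simp
    moreover have "symplectic_poly [:1, c, 1:]" "symplectic_poly [:1, d, 1:]"
      unfolding symplectic_poly_def by (auto simp: numeral_eq_Suc le_Suc_eq)
    moreover have "0 < degree [:1, c, 1::int:]" "0 < degree [:1, d, 1::int:]" by simp_all
    ultimately show False using H unfolding symplectically_irreducible_def by blast
  qed
next
  assume N: "\<not> (\<exists>m::int. a^2 - 4*b + 8 = m^2)"
  show "symplectically_irreducible [:1, a, b, a, 1::int:]"
    unfolding symplectically_irreducible_def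
  proof (intro conjI q_symp notI)
    show "0 < degree [:1, a, b, a, 1::int:]" by simp
  next
    assume "\<exists>f g. symplectic_poly f \<and> symplectic_poly g \<and> 0 < degree f \<and> 0 < degree g \<and> [:1, a, b, a, 1:] = f * g"
    then obtain f g where fg: "symplectic_poly f" "symplectic_poly g" "0 < degree f" "0 < degree g"
      "[:1, a, b, a, 1:] = f * g" by blast
    have "f \<noteq> 0" "g \<noteq> 0" using fg by auto
    then have "degree f + degree g = 4" using fg(5) q_deg[of a b] by (simp add: degree_mult_eq)
    moreover have "even (degree f)" "even (degree g)" using fg unfolding symplectic_poly_def by auto
    ultimately have df: "degree f = 2" and dg: "degree g = 2" using fg(3,4) by presburger+
    have f2: "f = [:1, coeff f 1, 1:]" by (rule symp_deg2[OF fg(1) df])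
    have g2: "g = [:1, coeff g 1, 1:]" by (rule symp_deg2[OF fg(2) dg])
    define cf where "cf = coeff f 1"
    define cg where "cg = coeff g 1"
    have f3: "f = [:1, cf, 1:]" using f2 unfolding cf_def .
    have g3: "g = [:1, cg, 1:]" using g2 unfolding cg_def .
    have "[:1, a, b, a, 1:] = [:1, cf, 1:] * [:1, cg, 1:]" using fg(5) unfolding f3 g3 .
    then have "[:1, a, b, a, 1:] = [:1, cf + cg, 2 + cf * cg, cf + cg, 1:]"
      unfolding prod2 .
    then have ea: "a = cf + cg" "b = 2 + cf * cg" by auto
    have "a^2 - 4*b + 8 = (cf - cg)^2" unfolding ea by (simp add: power2_eq_square algebra_simps)
    then show False using N by blast
  qed
qed

lemma power_iff: "(\<exists>k>1. poly_in_power [:1, a, b, a, 1::int:] k) \<longleftrightarrow> a = 0"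
proof
  assume "\<exists>k>1. poly_in_power [:1, a, b, a, 1::int:] k"
  then obtain k r where k: "k > 1" and r: "[:1, a, b, a, 1::int:] = pcompose r (monom 1 k)"
    unfolding poly_in_power_def by blast
  have "a = poly (pderiv (pcompose r (monom 1 k))) 0" using pderiv_q[of a b] unfolding r by simp
  also have "\<dots> = 0" using k by (simp add: pderiv_pcompose pderiv_monom poly_monom)
  finally show "a = 0" .
next
  assume "a = 0"
  then have "[:1, a, b, a, 1::int:] = pcompose [:1, b, 1:] (monom 1 2)" unfolding comp_ex by simp
  then have "poly_in_power [:1, a, b, a, 1::int:] 2" unfolding poly_in_power_def by blast
  then show "\<exists>k>1. poly_in_power [:1, a, b, a, 1::int:] k" by (intro exI[of _ 2]) auto
qed

lemma int_unit: "(x::int) * y = 1 \<Longrightarrow> (x = 1 \<and> y = 1) \<or> (x = -1 \<and> y = -1)"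
  by (simp only: zmult_eq_1_iff)

interpretation rc: map_poly_comm_ring_hom "of_rat :: rat \<Rightarrow> complex" ..

lemma of_rat_of_int_poly: "map_poly (of_rat :: rat \<Rightarrow> complex) (map_poly of_int p) = map_poly of_int p"
  by (simp add: map_poly_map_poly o_def)


lemma eval_q: "poly (map_poly (of_int :: int \<Rightarrow> complex) [:1, a, b, a, 1:]) z =
   1 + of_int a*z + of_int b*z^2 + of_int a*z^3 + z^4"
  by (simp add: algebra_simps power_numeral_reduce)

lemma all_roots_unity:
  fixes p :: "rat poly" and z w :: complex
  assumes irr: "irreducible p" and zN: "z^N = 1"
    and pz: "poly (map_poly of_rat p) z = 0" and pw: "poly (map_poly of_rat p) w = 0"
  shows "w^N = 1"
proof (cases "p dvd (monom 1 N - 1)")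
  case True
  then obtain r where r: "monom 1 N - 1 = p * r" by (auto elim: dvdE)
  have "map_poly (of_rat :: rat \<Rightarrow> complex) (p * r) = map_poly of_rat p * map_poly of_rat r"
    by (simp add: rc.hom_mult rc.hom_add rc.hom_minus rc.hom_one map_poly_monom)
  then have "map_poly (of_rat :: rat \<Rightarrow> complex) (monom 1 N - 1) = map_poly of_rat p * map_poly of_rat r"
    using r by simp
  then have "monom 1 N - 1 = map_poly (of_rat :: rat \<Rightarrow> complex) p * map_poly of_rat r"
    by (simp add: rc.hom_mult rc.hom_add rc.hom_minus rc.hom_one map_poly_monom)
  then have "poly (monom 1 N - 1) w = 0" using pw by simp
  then show ?thesis by (simp add: poly_monom)
next
  case False
  have "prime_elem p" using irr by (rule irreducible_imp_prime_elem)
  then have "coprime p (monom 1 N - 1)" using False by (simp add: prime_elem_imp_coprime)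
  then have g: "gcd p (monom 1 N - 1) = 1" by simp
  obtain u v where "bezout_coefficients p (monom 1 N - 1) = (u, v)" by force
  from bezout_coefficients[OF this] g have "u * p + v * (monom 1 N - 1) = 1" by simp
  then have "map_poly (of_rat :: rat \<Rightarrow> complex) (u * p + v * (monom 1 N - 1)) = 1" by simp
  then have "map_poly of_rat u * map_poly of_rat p + map_poly of_rat v * (monom 1 N - 1) = (1 :: complex poly)"
    by (simp add: rc.hom_mult rc.hom_add rc.hom_minus rc.hom_one map_poly_monom)
  then have "poly (map_poly of_rat u * map_poly of_rat p + map_poly of_rat v * (monom 1 N - 1)) z = (1::complex)"
    by simp
  then have False using pz zN by (simp add: poly_monom)
  then show ?thesis ..
qed

lemma t_real:
  fixes a b :: int and z t :: complex
  assumes irr: "irreducible (map_poly (of_int :: int \<Rightarrow> rat) [:1, a, b, a, 1:])"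
    and N: "N > 0" and zN: "z^N = 1"
    and qz: "poly (map_poly (of_int :: int \<Rightarrow> complex) [:1, a, b, a, 1:]) z = 0"
    and t: "t^2 + of_int a * t + (of_int b - 2) = 0"
  shows "Im t = 0 \<and> \<bar>Re t\<bar> \<le> 2"
proof -
  let ?Q = "map_poly (of_int :: int \<Rightarrow> rat) [:1, a, b, a, 1:]"
  have mq: "map_poly (of_rat :: rat \<Rightarrow> complex) ?Q = map_poly of_int [:1, a, b, a, 1:]"
    by (rule of_rat_of_int_poly)
  define s where "s = csqrt (t^2 - 4)"
  define w where "w = (t + s) / 2"
  have s2: "s^2 = t^2 - 4" by (simp add: s_def)
  have w1: "w^2 - t*w + 1 = 0"
  proof -
    have "4 * (w^2 - t*w + 1) = s^2 - t^2 + 4" by (simp add: w_def power2_eq_square field_simps)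
    also have "\<dots> = 0" using s2 by simp
    finally show ?thesis by (metis mult_eq_0_iff zero_neq_numeral)
  qed
  have "poly (map_poly (of_int :: int \<Rightarrow> complex) [:1, a, b, a, 1:]) w =
     (w^2 - t*w + 1) * (w^2 + (of_int a + t)*w + 1) + (t^2 + of_int a * t + (of_int b - 2)) * w^2"
    unfolding eval_q by (simp add: power2_eq_square power_numeral_reduce algebra_simps)
  then have qw: "poly (map_poly (of_int :: int \<Rightarrow> complex) [:1, a, b, a, 1:]) w = 0"
    using w1 t by simp
  have "w^N = 1" using all_roots_unity[OF irr zN] qz qw mq by metis
  then have nw: "norm w = 1" using N power_eq_1_iff by blast
  have wc: "w * cnj w = 1" using complex_norm_square[of w] nw by simp
  then have w0: "w \<noteq> 0" by auto
  have "t * w = w * (w + cnj w)" using w1 wc by (simp add: power2_eq_square algebra_simps)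
  then have tw: "t = w + cnj w" using w0 by (simp add: mult.commute)
  have "\<bar>Re w\<bar> \<le> 1" using abs_Re_le_cmod[of w] nw by simp
  then show ?thesis using tw by simp
qed

lemma enum:
  fixes a b :: int and r1 r2 :: real
  assumes r: "\<bar>r1\<bar> \<le> 2" "\<bar>r2\<bar> \<le> 2" "r1 + r2 = - of_int a" "r1 * r2 = of_int b - 2"
    and a0: "a \<noteq> 0" and N: "\<not> (\<exists>m::int. a^2 - 4*b + 8 = m^2)"
  shows "(a = 1 \<and> b = 1) \<or> (a = -1 \<and> b = 1)"
proof -
  define D where "D = a^2 - 4*b + 8"
  have Dr: "of_int D = (r1 - r2)^2"
  proof -
    have "of_int D = (r1 + r2)^2 - 4 * (r1 * r2)" unfolding D_def using r(3,4) by (simp add: power2_eq_square algebra_simps)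
    then show ?thesis by (simp add: power2_eq_square algebra_simps)
  qed
  have sum: "\<bar>of_int a\<bar> + \<bar>r1 - r2\<bar> \<le> (4::real)" using r(1-3) by (auto simp: abs_if split: if_splits)
  then have a4: "\<bar>a\<bar> \<le> 4" by linarith
  have "\<bar>r1 - r2\<bar>^2 \<le> (4 - \<bar>of_int a\<bar>)^2"
    using sum by (intro power_mono) auto
  then have "(of_int D :: real) \<le> (4 - of_int \<bar>a\<bar>)^2" using Dr by simp
  then have "(of_int D :: real) \<le> of_int ((4 - \<bar>a\<bar>)^2)" by simp
  then have Db: "D \<le> (4 - \<bar>a\<bar>)^2" by (simp only: of_int_le_iff)
  have D0: "D \<noteq> 0" using N unfolding D_def by (metis power_zero_numeral)
  have "D \<noteq> 1^2" "D \<noteq> 2^2" "D \<noteq> 3^2" using N unfolding D_def by blast+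
  then have D1: "D \<noteq> 1" "D \<noteq> 4" "D \<noteq> 9" by simp_all
  have "(0::real) \<le> of_int D" using Dr by simp
  then have Dpos: "0 \<le> D" by simp
  have "a^2 = \<bar>a\<bar>^2" by simp
  then have Dd: "D = \<bar>a\<bar>^2 - 4*b + 8" unfolding D_def by simp
  have "\<bar>a\<bar> = 1 \<or> \<bar>a\<bar> = 2 \<or> \<bar>a\<bar> = 3 \<or> \<bar>a\<bar> = 4" using a0 a4 by linarith
  then have "\<bar>a\<bar> = 1 \<and> b = 1"
  proof (elim disjE)
    assume h: "\<bar>a\<bar> = 1"
    then have "D = 9 - 4*b" "D \<le> 9" using Dd Db by simp_all
    then show ?thesis using h D0 D1 Dpos by presburger
  next
    assume h: "\<bar>a\<bar> = 2"
    then have "D = 12 - 4*b" "D \<le> 4" using Dd Db by simp_all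
    then show ?thesis using h D0 D1 Dpos by presburger
  next
    assume h: "\<bar>a\<bar> = 3"
    then have "D \<le> 1" using Db by simp_all
    then show ?thesis using h D0 D1 Dpos by presburger
  next
    assume h: "\<bar>a\<bar> = 4"
    then have "D \<le> 0" using Db by simp_all
    then show ?thesis using h D0 D1 Dpos by presburger
  qed
  then show ?thesis by (auto simp: abs_if split: if_splits)
qed


lemma deg1_form: "degree (p::'a::zero poly) \<le> 1 \<Longrightarrow> p = [:coeff p 0, coeff p 1:]"
  by (rule poly_eqI) (auto simp: coeff_pCons coeff_eq_0 numeral_2_eq_2 split: nat.splits)

lemma deg1_factor:
  assumes gh: "[:1, a, b, a, 1::int:] = g * h" and dg: "degree g = 1"
  shows "\<exists>m::int. a^2 - 4*b + 8 = m^2"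
proof -
  have "lead_coeff (g * h) = 1" unfolding gh[symmetric] by simp
  then have "lead_coeff g * lead_coeff h = 1" by (simp add: lead_coeff_mult)
  from int_unit[OF this] have "lead_coeff g = 1 \<or> lead_coeff g = -1" by auto
  then have l: "coeff g 1 = 1 \<or> coeff g 1 = -1" using dg by simp
  have "coeff (g * h) 0 = 1" unfolding gh[symmetric] by simp
  then have "coeff g 0 * coeff h 0 = 1" by (simp add: coeff_mult_0)
  from int_unit[OF this] have c: "coeff g 0 = 1 \<or> coeff g 0 = -1" by auto
  define r where "r = - coeff g 0 * coeff g 1"
  have g: "g = [:coeff g 0, coeff g 1:]" by (rule deg1_form) (simp add: dg)
  have "poly g r = coeff g 0 + coeff g 1 * r" by (subst g) simp
  also have "\<dots> = 0" using l c unfolding r_def by auto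
  finally have "poly [:1, a, b, a, 1::int:] r = 0" using gh by simp
  moreover have "r = 1 \<or> r = -1" using l c unfolding r_def by auto
  ultimately have "2 + 2*a + b = 0 \<or> 2 - 2*a + b = 0" by auto
  then show ?thesis
  proof
    assume "2 + 2*a + b = 0"
    then have "a^2 - 4*b + 8 = (a+4)^2" by (simp add: power2_eq_square algebra_simps)
    then show ?thesis by blast
  next
    assume "2 - 2*a + b = 0"
    then have "a^2 - 4*b + 8 = (a-4)^2" by (simp add: power2_eq_square algebra_simps)
    then show ?thesis by blast
  qed
qed

lemma deg22_factor:
  assumes gh: "[:1, a, b, a, 1::int:] = g * h" and dg: "degree g = 2" "degree h = 2"
  shows "a = 0 \<or> (\<exists>m::int. a^2 - 4*b + 8 = m^2)"
proof -
  obtain g0 g1 g2 h0 h1 h2 where g: "g = [:g0, g1, g2:]" and h: "h = [:h0, h1, h2:]"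
    using deg2_form[of g] deg2_form[of h] dg by auto
  have "[:1, a, b, a, 1::int:] = [:g0*h0, g0*h1+g1*h0, g0*h2+g1*h1+g2*h0, g1*h2+g2*h1, g2*h2:]"
    using gh g h prod22 by metis
  then have e: "g0*h0 = 1" "g0*h1+g1*h0 = a" "g0*h2+g1*h1+g2*h0 = b" "g1*h2+g2*h1 = a" "g2*h2 = 1"
    by auto
  from int_unit[OF e(1)] int_unit[OF e(5)] show ?thesis
  proof (elim disjE conjE)
    assume "g0 = 1" "h0 = 1" "g2 = 1" "h2 = 1"
    then have ea: "a = g1 + h1" "b = g1*h1 + 2" using e by simp_all
    have "a^2 - 4*b + 8 = (g1 - h1)^2" unfolding ea by (simp add: power2_eq_square algebra_simps)
    then show ?thesis by blast
  next
    assume "g0 = -1" "h0 = -1" "g2 = -1" "h2 = -1"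
    then have ea: "a = - g1 - h1" "b = g1*h1 + 2" using e by simp_all
    have "a^2 - 4*b + 8 = (g1 - h1)^2" unfolding ea by (simp add: power2_eq_square algebra_simps)
    then show ?thesis by blast
  next
    assume "g0 = 1" "h0 = 1" "g2 = -1" "h2 = -1"
    then show ?thesis using e by simp
  next
    assume "g0 = -1" "h0 = -1" "g2 = 1" "h2 = 1"
    then show ?thesis using e by simp
  qed
qed

lemma irr_Q:
  assumes a0: "a \<noteq> 0" and N: "\<not> (\<exists>m::int. a^2 - 4*b + 8 = m^2)"
  shows "irreducible (map_poly (of_int :: int \<Rightarrow> rat) [:1, a, b, a, 1::int:])"
proof (rule irreducibleI)
  let ?Q = "map_poly (of_int :: int \<Rightarrow> rat) [:1, a, b, a, 1::int:]"
  have dQ: "degree ?Q = 4" by simp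
  then show Q0: "?Q \<noteq> 0" by auto
  show "\<not> is_unit ?Q" using dQ Q0 is_unit_iff_degree by fastforce
  fix g h assume gh: "?Q = g * h"
  show "is_unit g \<or> is_unit h"
  proof (rule ccontr)
    assume "\<not> (is_unit g \<or> is_unit h)"
    moreover have "g \<noteq> 0" "h \<noteq> 0" using gh Q0 by auto
    ultimately have dpos: "degree g > 0" "degree h > 0" using is_unit_iff_degree by auto
    obtain g' h' where f: "[:1, a, b, a, 1::int:] = g' * h'" "degree g' = degree g" "degree h' = degree h"
      using rat_to_int_factor[OF gh] by blast
    from dQ have "degree (g * h) = 4" by (simp only: gh)
    then have "degree g + degree h = 4" using \<open>g \<noteq> 0\<close> \<open>h \<noteq> 0\<close> by (simp add: degree_mult_eq)
    then have "degree g' = 1 \<or> degree h' = 1 \<or> (degree g' = 2 \<and> degree h' = 2)" using dpos f by auto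
    then show False
    proof (elim disjE conjE)
      assume "degree g' = 1" then show False using deg1_factor[OF f(1)] N by blast
    next
      assume "degree h' = 1" then show False using deg1_factor[of a b h' g'] f(1) N by (simp add: mult.commute)
    next
      assume "degree g' = 2" "degree h' = 2" then show False using deg22_factor[OF f(1)] N a0 by blast
    qed
  qed
qed

lemma root_exists: "\<exists>z::complex. poly (map_poly (of_int :: int \<Rightarrow> complex) [:1, a, b, a, 1::int:]) z = 0"
proof -
  have "degree (map_poly (of_int :: int \<Rightarrow> complex) [:1, a, b, a, 1::int:]) = 4" by simp
  then have "\<not> constant (poly (map_poly (of_int :: int \<Rightarrow> complex) [:1, a, b, a, 1::int:]))"
    using constant_degree by force
  then show ?thesis by (rule fundamental_theorem_of_algebra)
qed

lemma prim_ex: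
  assumes "z^N = 1" "N > 0"
  shows "\<exists>n. primitive_root_of_unity n z"
proof -
  define n where "n = (LEAST k. 0 < k \<and> z^k = 1)"
  have "0 < n \<and> z^n = 1" unfolding n_def by (rule LeastI[of _ N]) (use assms in auto)
  moreover have "\<forall>k. 0 < k \<and> k < n \<longrightarrow> z^k \<noteq> 1" unfolding n_def using not_less_Least by blast
  ultimately show ?thesis unfolding primitive_root_of_unity_def by blast
qed

lemma cyc_pos:
  assumes "(a = 1 \<and> b = 1) \<or> (a = -1 \<and> b = 1)"
  shows "\<exists>n z. primitive_root_of_unity n z \<and> poly (map_poly (of_int :: int \<Rightarrow> complex) [:1, a, b, a, 1::int:]) z = 0"
proof -
  obtain z where z: "poly (map_poly (of_int :: int \<Rightarrow> complex) [:1, a, b, a, 1::int:]) z = 0"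
    using root_exists by blast
  have "z^10 = 1" using assms
  proof
    assume ab: "a = 1 \<and> b = 1"
    have "z^5 - 1 = (z - 1) * poly (map_poly (of_int :: int \<Rightarrow> complex) [:1, a, b, a, 1::int:]) z"
      unfolding eval_q using ab by (simp add: power_numeral_reduce algebra_simps)
    then have "z^5 - 1 = 0" using z by (metis mult_zero_right)
    then have "z^5 = 1" by simp
    then have "(z^5)^2 = 1" by simp
    then show ?thesis by (simp flip: power_mult)
  next
    assume ab: "a = -1 \<and> b = 1"
    have "z^5 + 1 = (z + 1) * poly (map_poly (of_int :: int \<Rightarrow> complex) [:1, a, b, a, 1::int:]) z"
      unfolding eval_q using ab by (simp add: power_numeral_reduce algebra_simps)
    then have "z^5 + 1 = 0" using z by (metis mult_zero_right)
    then have "z^5 = -1" by (simp add: eq_neg_iff_add_eq_0)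
    then have "(z^5)^2 = 1" by simp
    then show ?thesis by (simp flip: power_mult)
  qed
  then obtain n where "primitive_root_of_unity n z" using prim_ex[of z 10] by auto
  then show ?thesis using z by blast
qed

lemma cyc_neg:
  assumes a0: "a \<noteq> 0" and N: "\<not> (\<exists>m::int. a^2 - 4*b + 8 = m^2)"
    and irr: "irreducible (map_poly (of_int :: int \<Rightarrow> rat) [:1, a, b, a, 1::int:])"
    and pr: "primitive_root_of_unity n z" and qz: "poly (map_poly (of_int :: int \<Rightarrow> complex) [:1, a, b, a, 1::int:]) z = 0"
  shows "(a = 1 \<and> b = 1) \<or> (a = -1 \<and> b = 1)"
proof -
  have n: "n > 0" "z^n = 1" using pr unfolding primitive_root_of_unity_def by auto
  define s where "s = csqrt (of_int (a^2 - 4*b + 8))"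
  have s2: "s^2 = of_int a^2 - 4 * of_int b + 8" by (simp add: s_def)
  define t1 where "t1 = (- of_int a + s) / 2"
  define t2 where "t2 = (- of_int a - s) / 2"
  have "t1^2 + of_int a * t1 + (of_int b - 2) = (s^2 - (of_int a^2 - 4 * of_int b + 8)) / 4"
    unfolding t1_def by (simp add: power2_eq_square field_simps)
  then have r1: "t1^2 + of_int a * t1 + (of_int b - 2) = 0" using s2 by simp
  have "t2^2 + of_int a * t2 + (of_int b - 2) = (s^2 - (of_int a^2 - 4 * of_int b + 8)) / 4"
    unfolding t2_def by (simp add: power2_eq_square field_simps)
  then have r2: "t2^2 + of_int a * t2 + (of_int b - 2) = 0" using s2 by simp
  have T1: "Im t1 = 0 \<and> \<bar>Re t1\<bar> \<le> 2" by (rule t_real[OF irr n qz r1])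
  have T2: "Im t2 = 0 \<and> \<bar>Re t2\<bar> \<le> 2" by (rule t_real[OF irr n qz r2])
  have sum: "t1 + t2 = - of_int a" unfolding t1_def t2_def by (simp add: field_simps)
  have "t1 * t2 = (of_int a^2 - s^2) / 4" unfolding t1_def t2_def by (simp add: power2_eq_square field_simps)
  also have "\<dots> = of_int b - 2" unfolding s2 by (simp add: field_simps)
  finally have prod: "t1 * t2 = of_int b - 2" .
  have "Re t1 + Re t2 = - of_int a" using arg_cong[OF sum, of Re] by simp
  moreover have "Re t1 * Re t2 = of_int b - 2" using arg_cong[OF prod, of Re] T1 T2 by simp
  ultimately show ?thesis using enum[of "Re t1" "Re t2" a b] T1 T2 a0 N by blast
qed


theorem proposition4p1:
  fixes a b :: int
  shows "homological_criterion [:1, a, b, a, 1:] \<longleftrightarrow>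
    a \<noteq> 0 \<and> (a, b) \<notin> {(1, 1), (-1, 1)} \<and> \<not> (\<exists>m :: int. a^2 - 4*b + 8 = m^2)"
proof -
  have cyc: "cyclotomic_poly [:1, a, b, a, 1:] \<longleftrightarrow> ((a = 1 \<and> b = 1) \<or> (a = -1 \<and> b = 1))"
    if a0: "a \<noteq> 0" and N: "\<not> (\<exists>m :: int. a^2 - 4*b + 8 = m^2)"
  proof
    assume "cyclotomic_poly [:1, a, b, a, 1:]"
    then obtain n z where irr: "irreducible (map_poly (of_int :: int \<Rightarrow> rat) [:1, a, b, a, 1::int:])"
      and pr: "primitive_root_of_unity n z"
      and qz: "poly (map_poly (of_int :: int \<Rightarrow> complex) [:1, a, b, a, 1::int:]) z = 0"
      unfolding cyclotomic_poly_def by blast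
    show "(a = 1 \<and> b = 1) \<or> (a = -1 \<and> b = 1)" by (rule cyc_neg[OF a0 N irr pr qz])
  next
    assume ab: "(a = 1 \<and> b = 1) \<or> (a = -1 \<and> b = 1)"
    show "cyclotomic_poly [:1, a, b, a, 1:]"
      unfolding cyclotomic_poly_def using irr_Q[OF a0 N] cyc_pos[OF ab] by simp
  qed
  show ?thesis
    unfolding homological_criterion_def symp_irr_iff power_iff
    using cyc by auto
qed

end
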